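(* Let $m \ge 2$ and let $S_1,\dots,S_m$ be mutually independent nonnegative random variables (the ranking scores), each having a probability density function on $[0,\infty)$ and a finite first moment. For each $j$, let $r_j \in \{1,\dots,m\}$ be the rank of $S_j$ among $S_1,\dots,S_m$ in decreasing order, i.e. $r_j = 1 + \#\{\ell \ne j : S_\ell > S_j\}$ (ties occur with probability zero). Then for any $i \in \{1,\dots,m-1\}$ and any $k \in \{1,\dots,m-1\}$ with $\mathrm{P}(r_i = k) > 0$ and $\mathrm{P}(r_i = k+1) > 0$, $$\mathbb{E}[S_i \mid r_i = k] \ \ge\ \mathbb{E}[S_i \mid r_i = k+1].$$ *)

theory Defs
  imports "HOL-Probability.Probability"
begin

definition rank :: "nat \<Rightarrow> (nat \<Rightarrow> 'a \<Rightarrow> real) \<Rightarrow> nat \<Rightarrow> 'a \<Rightarrow> nat" where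
  "rank m S j \<omega> = 1 + card {l \<in> {1..m}. l \<noteq> j \<and> S l \<omega> > S j \<omega>}"

definition cond_exp_event :: "'a measure \<Rightarrow> ('a \<Rightarrow> real) \<Rightarrow> 'a set \<Rightarrow> real" where
  "cond_exp_event M X A = (LINT x:A|M. X x) / measure M A"

end

theory Submission
  imports Defs
begin


fun pb :: "real list \<Rightarrow> int \<Rightarrow> real" where
  "pb [] j = (if j = 0 then 1 else 0)"
| "pb (x # xs) j = x * pb xs (j - 1) + (1 - x) * pb xs j"

lemma pb_nonneg: "\<forall>x\<in>set xs. 0 \<le> x \<and> x \<le> 1 \<Longrightarrow> 0 \<le> pb xs j"
proof (induction xs arbitrary: j)
  case Nil then show ?case by simp
next
  case (Cons x xs)
  then show ?case by (simp add: add_nonneg_nonneg mult_nonneg_nonneg)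
qed

lemma pb_K:
  fixes xs :: "'b list" and qf pf :: "'b \<Rightarrow> real"
  assumes "\<forall>x\<in>set xs. 0 \<le> qf x \<and> qf x \<le> pf x \<and> pf x \<le> 1"
  shows "\<forall>a b a' b'. a + b = a' + b' \<longrightarrow> a \<le> a' \<longrightarrow> b \<le> a' \<longrightarrow>
     pb (map qf xs) a' * pb (map pf xs) b' \<le> pb (map qf xs) a * pb (map pf xs) b"
  using assms
proof (induction xs)
  case Nil
  show ?case by auto
next
  case (Cons x xs)
  define H where "H a b = pb (map qf xs) a * pb (map pf xs) b" for a b
  have IH: "\<And>a b a' b'. a + b = a' + b' \<Longrightarrow> a \<le> a' \<Longrightarrow> b \<le> a' \<Longrightarrow> H a' b' \<le> H a b"
    using Cons unfolding H_def by auto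
  have Hnn: "\<And>a b. 0 \<le> H a b" unfolding H_def using Cons.prems
    by (intro mult_nonneg_nonneg pb_nonneg) force+
  define q where "q = qf x"
  define p where "p = pf x"
  have qp: "0 \<le> q" "q \<le> p" "p \<le> 1" using Cons.prems by (auto simp: q_def p_def)
  have exp: "pb (map qf (x # xs)) a * pb (map pf (x # xs)) b =
     q*p * H (a-1) (b-1) + q*(1-p) * H (a-1) b + (1-q)*p * H a (b-1) + (1-q)*(1-p) * H a b" for a b
    by (simp add: H_def q_def p_def algebra_simps)
  show ?case
  proof (intro allI impI)
    fix a b a' b' :: int
    assume ab: "a + b = a' + b'" "a \<le> a'" "b \<le> a'"
    show "pb (map qf (x # xs)) a' * pb (map pf (x # xs)) b' \<le> pb (map qf (x # xs)) a * pb (map pf (x # xs)) b"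
    proof (cases "a' = a")
      case True
      then have "b' = b" using ab by simp
      then show ?thesis using True by simp
    next
      case False
      then have lt: "a < a'" using ab by simp
      have c1: "(1-q)*(1-p) * H a' b' \<le> (1-q)*(1-p) * H a b"
        using IH[of a b a' b'] ab qp by (intro mult_left_mono) auto
      have c2: "q*p * H (a'-1) (b'-1) \<le> q*p * H (a-1) (b-1)"
        using IH[of "a-1" "b-1" "a'-1" "b'-1"] ab qp by (intro mult_left_mono) auto
      have c3: "q*(1-p) * H a' (b'-1) \<le> q*(1-p) * H (a-1) b"
        using IH[of "a-1" b a' "b'-1"] ab qp by (intro mult_left_mono) auto
      have c4: "(1-q)*p * H (a'-1) b' \<le> (1-q)*p * H a (b-1)"
        using IH[of a "b-1" "a'-1" b'] ab lt qp by (intro mult_left_mono) auto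
      have c5: "((1-q)*p - q*(1-p)) * H a' (b'-1) \<le> ((1-q)*p - q*(1-p)) * H (a'-1) b'"
        using IH[of "a'-1" b' a' "b'-1"] ab qp by (intro mult_left_mono) (auto simp: algebra_simps)
      have id: "q*(1-p) * H (a-1) b + (1-q)*p * H a (b-1) - q*(1-p) * H (a'-1) b' - (1-q)*p * H a' (b'-1)
        = (q*(1-p) * H (a-1) b - q*(1-p) * H a' (b'-1)) + ((1-q)*p * H a (b-1) - (1-q)*p * H (a'-1) b')
          + (((1-q)*p - q*(1-p)) * H (a'-1) b' - ((1-q)*p - q*(1-p)) * H a' (b'-1))"
        by (simp add: algebra_simps)
      show ?thesis unfolding exp using c1 c2 c3 c4 c5 id by linarith
    qed
  qed
qed



lemma card_filter_sum: "finite L \<Longrightarrow> real (card {l\<in>L. P l}) = (\<Sum>l\<in>L. if P l then 1 else 0)"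
  by (simp add: sum.If_cases Int_def)

lemma cnt_measurable[measurable]:
  assumes "finite L"
  shows "(\<lambda>(s::real, y). real (card {l\<in>L. s < y l})) \<in> borel_measurable (borel \<Otimes>\<^sub>M PiM L (\<lambda>_. borel))"
proof -
  have "(\<lambda>(s::real, y). \<Sum>l\<in>L. if s < y l then 1 else (0::real)) \<in> borel_measurable (borel \<Otimes>\<^sub>M PiM L (\<lambda>_. borel))"
    by measurable
  moreover have "(\<lambda>(s::real, y). real (card {l\<in>L. s < y l})) = (\<lambda>(s::real, y). \<Sum>l\<in>L. if s < y l then 1 else (0::real))"
    using assms by (auto simp: card_filter_sum)
  ultimately show ?thesis by simp
qed

lemma cnt_measurable1[measurable]:
  assumes "finite L"
  shows "(\<lambda>y. real (card {l\<in>L. (s::real) < y l})) \<in> borel_measurable (PiM L (\<lambda>_. borel))"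
  using measurable_Pair2[OF cnt_measurable[OF assms], of s] by simp

lemma pb_event:
  fixes M :: "'a measure" and S :: "nat \<Rightarrow> 'a \<Rightarrow> real" and s :: real
  assumes P: "prob_space M" and ind: "prob_space.indep_vars M (\<lambda>_. borel) S I"
    and "distinct ys" "set ys \<subseteq> I"
  shows "measure M {\<omega>\<in>space M. int (card {l\<in>set ys. s < S l \<omega>}) = j}
     = pb (map (\<lambda>l. measure M {\<omega>\<in>space M. s < S l \<omega>}) ys) j"
  using assms(3,4)
proof (induction ys arbitrary: j)
  interpret prob_space M by fact
  case Nil
  then show ?case by (cases "j = 0") (simp_all add: prob_space)
next
  interpret prob_space M by fact
  case (Cons a ys)
  have a: "a \<in> I" "a \<notin> set ys" "set ys \<subseteq> I" "distinct ys" using Cons.prems by auto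
  let ?V = "\<lambda>\<omega>. restrict (\<lambda>l. S l \<omega>) (set ys)"
  let ?N = "PiM (set ys) (\<lambda>_. borel :: real measure)"
  let ?Va = "\<lambda>\<omega>. restrict (\<lambda>l. S l \<omega>) {a}"
  let ?Na = "PiM {a} (\<lambda>_. borel :: real measure)"
  have iv: "indep_var ?Na ?Va ?N ?V" using a by (intro indep_var_restrict[OF ind]) auto
  define B where "B j = {y\<in>space ?N. int (card {l\<in>set ys. s < y l}) = j}" for j
  have Bs: "B j \<in> sets ?N" for j unfolding B_def by measurable
  define A1 where "A1 = {y\<in>space ?Na. s < y a}"
  define A2 where "A2 = {y\<in>space ?Na. \<not> s < y a}"
  have A1s: "A1 \<in> sets ?Na" unfolding A1_def by measurable
  have A2s: "A2 \<in> sets ?Na" unfolding A2_def by measurable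
  have VB: "?V -` B j \<inter> space M = {\<omega>\<in>space M. int (card {l\<in>set ys. s < S l \<omega>}) = j}" for j
  proof -
    have r: "{l. (l \<in> set ys \<longrightarrow> s < S l \<omega>) \<and> l \<in> set ys} = {l\<in>set ys. s < S l \<omega>}" for \<omega> by auto
    show ?thesis by (auto simp: B_def space_PiM r)
  qed
  have VA1: "?Va -` A1 \<inter> space M = {\<omega>\<in>space M. s < S a \<omega>}"
    by (auto simp: A1_def space_PiM)
  have VA2: "?Va -` A2 \<inter> space M = space M - {\<omega>\<in>space M. s < S a \<omega>}"
    by (auto simp: A2_def space_PiM)
  have cnt: "card {l. (l = a \<or> l \<in> set ys) \<and> s < S l \<omega>} = (if s < S a \<omega> then Suc (card {l\<in>set ys. s < S l \<omega>}) else card {l\<in>set ys. s < S l \<omega>})" for \<omega>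
  proof -
    have "{l. (l = a \<or> l \<in> set ys) \<and> s < S l \<omega>} = (if s < S a \<omega> then insert a {l\<in>set ys. s < S l \<omega>} else {l\<in>set ys. s < S l \<omega>})"
      by auto
    then show ?thesis using a(2) by auto
  qed
  have split: "{\<omega>\<in>space M. int (card {l\<in>set (a#ys). s < S l \<omega>}) = j} =
     ((\<lambda>x. (?Va x, ?V x)) -` (A1 \<times> B (j-1)) \<inter> space M) \<union> ((\<lambda>x. (?Va x, ?V x)) -` (A2 \<times> B j) \<inter> space M)"
  proof -
    have r: "{l. (l \<in> set ys \<longrightarrow> s < S l \<omega>) \<and> l \<in> set ys} = {l\<in>set ys. s < S l \<omega>}" for \<omega> by auto
    have r2: "card {l\<in>set ys. s < restrict (\<lambda>l. S l \<omega>) (set ys) l} = card{l\<in>set ys. s < S l \<omega>}" for \<omega>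
      by (rule arg_cong[where f=card]) auto
    have r3: "restrict (\<lambda>l. S l \<omega>) {a} a = S a \<omega>" for \<omega> by simp
    show ?thesis by (auto simp del: restrict_apply simp add: B_def A1_def A2_def space_PiM cnt r2 r3)
  qed
  have e1: "prob ((\<lambda>x. (?Va x, ?V x)) -` (A1 \<times> B (j-1)) \<inter> space M) = prob {\<omega>\<in>space M. s < S a \<omega>} * prob {\<omega>\<in>space M. int (card {l\<in>set ys. s < S l \<omega>}) = j - 1}"
    using indep_varD[OF iv A1s Bs] VB VA1 by simp
  have e2: "prob ((\<lambda>x. (?Va x, ?V x)) -` (A2 \<times> B j) \<inter> space M) = (1 - prob {\<omega>\<in>space M. s < S a \<omega>}) * prob {\<omega>\<in>space M. int (card {l\<in>set ys. s < S l \<omega>}) = j}"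
  proof -
    have Sa[measurable]: "S a \<in> borel_measurable M" using ind a unfolding indep_vars_def by auto
    have "prob (space M - {\<omega>\<in>space M. s < S a \<omega>}) = 1 - prob {\<omega>\<in>space M. s < S a \<omega>}"
      by (subst prob_compl) auto
    then show ?thesis
      using indep_varD[OF iv A2s Bs] VB VA2 by simp
  qed
  have ms: "(\<lambda>x. (?Va x, ?V x)) -` (A1 \<times> B (j-1)) \<inter> space M \<in> events"
     "(\<lambda>x. (?Va x, ?V x)) -` (A2 \<times> B j) \<inter> space M \<in> events"
  proof -
    have "(\<lambda>x. (?Va x, ?V x)) \<in> measurable M (?Na \<Otimes>\<^sub>M ?N)"
      using indep_var_rv1[OF iv] indep_var_rv2[OF iv] by (rule measurable_Pair)
    then show "(\<lambda>x. (?Va x, ?V x)) -` (A1 \<times> B (j-1)) \<inter> space M \<in> events"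
     "(\<lambda>x. (?Va x, ?V x)) -` (A2 \<times> B j) \<inter> space M \<in> events"
      using A1s A2s Bs by (auto intro!: measurable_sets)
  qed
  have "prob {\<omega>\<in>space M. int (card {l\<in>set (a#ys). s < S l \<omega>}) = j} =
     prob ((\<lambda>x. (?Va x, ?V x)) -` (A1 \<times> B (j-1)) \<inter> space M) + prob ((\<lambda>x. (?Va x, ?V x)) -` (A2 \<times> B j) \<inter> space M)"
    unfolding split
    by (rule finite_measure_Union) (use ms in \<open>auto simp: A1_def A2_def\<close>)
  also have "\<dots> = pb (map (\<lambda>l. prob {\<omega>\<in>space M. s < S l \<omega>}) (a#ys)) j"
    unfolding e1 e2 using Cons.IH a by simp
  finally show ?case .
qed



lemma fub:
  fixes M :: "'a measure" and S :: "nat \<Rightarrow> 'a \<Rightarrow> real" and f :: "real \<Rightarrow> real" and c :: real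
  assumes P: "prob_space M" and ind: "prob_space.indep_vars M (\<lambda>_. borel) S I"
    and iI: "i \<in> I" and LI: "L \<subseteq> I" "i \<notin> L" and fin: "finite L"
    and f[measurable]: "f \<in> borel_measurable borel" and fi: "integrable M (\<lambda>\<omega>. f (S i \<omega>))"
  defines "G \<equiv> \<lambda>s. measure M {\<omega>\<in>space M. real (card {l\<in>L. s < S l \<omega>}) = c}"
  shows "G \<in> borel_measurable borel"
    and "integrable M (\<lambda>\<omega>. f (S i \<omega>) * (if real (card {l\<in>L. S i \<omega> < S l \<omega>}) = c then 1 else 0))"
    and "(\<integral>\<omega>. f (S i \<omega>) * (if real (card {l\<in>L. S i \<omega> < S l \<omega>}) = c then 1 else 0) \<partial>M)
         = (\<integral>\<omega>. f (S i \<omega>) * G (S i \<omega>) \<partial>M)"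
proof -
  interpret prob_space M by fact
  let ?V = "\<lambda>\<omega>. restrict (\<lambda>l. S l \<omega>) L"
  let ?N = "PiM L (\<lambda>_. borel :: real measure)"
  let ?Vi = "\<lambda>\<omega>. restrict (\<lambda>l. S l \<omega>) {i}"
  let ?Ni = "PiM {i} (\<lambda>_. borel :: real measure)"
  have iv: "indep_var ?Ni ?Vi ?N ?V" using iI LI by (intro indep_var_restrict[OF ind]) auto
  have Vi[measurable]: "?Vi \<in> measurable M ?Ni" by (rule indep_var_rv1[OF iv])
  have V[measurable]: "?V \<in> measurable M ?N" by (rule indep_var_rv2[OF iv])
  have Si[measurable]: "S i \<in> borel_measurable M" using ind iI unfolding indep_vars_def by auto
  have deq: "distr M ?Ni ?Vi \<Otimes>\<^sub>M distr M ?N ?V = distr M (?Ni \<Otimes>\<^sub>M ?N) (\<lambda>x. (?Vi x, ?V x))"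
    using iv by (simp add: indep_var_distribution_eq)
  let ?mu = "distr M ?Ni ?Vi" and ?nu = "distr M ?N ?V"
  interpret mu: prob_space ?mu by (rule prob_space_distr) simp
  interpret nu: prob_space ?nu by (rule prob_space_distr) simp
  interpret PP: pair_prob_space ?mu ?nu ..
  have sum_eq: "real (card {l\<in>L. s < y l}) = (\<Sum>l\<in>L. if s < y l then 1 else 0)" for s :: real and y :: "nat \<Rightarrow> real"
    using fin by (rule card_filter_sum)
  define F where "F = (\<lambda>(x::nat \<Rightarrow> real, y::nat \<Rightarrow> real). f (x i) * (if real (card {l\<in>L. x i < y l}) = c then 1 else 0))"
  have Fm[measurable]: "F \<in> borel_measurable (?Ni \<Otimes>\<^sub>M ?N)"
  proof -
    have "(\<lambda>(x::nat \<Rightarrow> real, y::nat \<Rightarrow> real). f (x i) * (if (\<Sum>l\<in>L. if x i < y l then 1 else 0) = c then 1 else (0::real)))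
       \<in> borel_measurable (?Ni \<Otimes>\<^sub>M ?N)" by measurable
    then show ?thesis unfolding F_def sum_eq .
  qed
  have r2: "card {l\<in>L. s < restrict (\<lambda>l. S l \<omega>) L l} = card {l\<in>L. s < S l \<omega>}" for s \<omega>
    by (rule arg_cong[where f=card]) auto
  have FT: "F (?Vi \<omega>, ?V \<omega>) = f (S i \<omega>) * (if real (card {l\<in>L. S i \<omega> < S l \<omega>}) = c then 1 else 0)" for \<omega>
  proof -
    have r3: "restrict (\<lambda>l. S l \<omega>) {i} i = S i \<omega>" by simp
    show ?thesis unfolding F_def by (simp del: restrict_apply add: r2 r3)
  qed
  have mT: "(\<lambda>\<omega>. F (?Vi \<omega>, ?V \<omega>)) \<in> borel_measurable M" by measurable
  have intT: "integrable M (\<lambda>\<omega>. F (?Vi \<omega>, ?V \<omega>))"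
    by (rule Bochner_Integration.integrable_bound[OF fi]) (use mT in \<open>auto simp: FT\<close>)
  then show int1: "integrable M (\<lambda>\<omega>. f (S i \<omega>) * (if real (card {l\<in>L. S i \<omega> < S l \<omega>}) = c then 1 else 0))"
    unfolding FT .
  have intP: "integrable (?mu \<Otimes>\<^sub>M ?nu) F"
    unfolding deq using intT by (subst integrable_distr_eq) auto
  have Gnu: "G s = (\<integral>y. (if real (card {l\<in>L. s < y l}) = c then 1 else 0::real) \<partial>?nu)" for s
  proof -
    have ms: "{y\<in>space ?N. real (card {l\<in>L. s < y l}) = c} \<in> sets ?N" by measurable
    have "(\<integral>y. (if real (card {l\<in>L. s < y l}) = c then 1 else 0::real) \<partial>?nu)
        = (\<integral>y. indicator {y\<in>space ?N. real (card {l\<in>L. s < y l}) = c} y \<partial>?nu)"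
      by (rule Bochner_Integration.integral_cong) (auto split: split_indicator)
    also have "\<dots> = measure M (?V -` {y\<in>space ?N. real (card {l\<in>L. s < y l}) = c} \<inter> space M)"
      using ms by (simp add: measure_distr Int_absorb2 sets.sets_into_space)
    also have "?V -` {y\<in>space ?N. real (card {l\<in>L. s < y l}) = c} \<inter> space M = {\<omega>\<in>space M. real (card {l\<in>L. s < S l \<omega>}) = c}"
      by (auto simp del: restrict_apply simp: r2 space_PiM)
    finally show ?thesis unfolding G_def by (rule sym)
  qed
  have inner: "(\<integral>y. F (x, y) \<partial>?nu) = f (x i) * G (x i)" for x
    unfolding F_def Gnu by simp
  show Gm: "G \<in> borel_measurable borel"
  proof -
    have "(\<lambda>s. \<integral>y. (if real (card {l\<in>L. s < y l}) = c then 1 else 0::real) \<partial>?nu) \<in> borel_measurable borel"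
    proof (rule nu.borel_measurable_lebesgue_integral)
      have "(\<lambda>(s::real, y::nat \<Rightarrow> real). (if (\<Sum>l\<in>L. if s < y l then 1 else 0) = c then 1 else (0::real)))
         \<in> borel_measurable (borel \<Otimes>\<^sub>M ?nu)" by measurable
      then show "(\<lambda>(s::real, y). (if real (card {l\<in>L. s < y l}) = c then 1 else 0::real)) \<in> borel_measurable (borel \<Otimes>\<^sub>M ?nu)"
        unfolding sum_eq .
    qed
    then show ?thesis unfolding Gnu[abs_def] .
  qed
  have "(\<integral>\<omega>. f (S i \<omega>) * (if real (card {l\<in>L. S i \<omega> < S l \<omega>}) = c then 1 else 0) \<partial>M)
      = (\<integral>\<omega>. F (?Vi \<omega>, ?V \<omega>) \<partial>M)" unfolding FT ..
  also have "\<dots> = integral\<^sup>L (distr M (?Ni \<Otimes>\<^sub>M ?N) (\<lambda>x. (?Vi x, ?V x))) F"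
    by (rule integral_distr[symmetric]) auto
  also have "\<dots> = integral\<^sup>L (?mu \<Otimes>\<^sub>M ?nu) F" unfolding deq ..
  also have "\<dots> = (\<integral>x. (\<integral>y. F (x, y) \<partial>?nu) \<partial>?mu)"
    using PP.integral_fst'[OF intP] by simp
  also have "\<dots> = (\<integral>x. f (x i) * G (x i) \<partial>?mu)" unfolding inner ..
  also have "\<dots> = (\<integral>\<omega>. f (S i \<omega>) * G (S i \<omega>) \<partial>M)"
    using Gm by (subst integral_distr) auto
  finally show "(\<integral>\<omega>. f (S i \<omega>) * (if real (card {l\<in>L. S i \<omega> < S l \<omega>}) = c then 1 else 0) \<partial>M)
         = (\<integral>\<omega>. f (S i \<omega>) * G (S i \<omega>) \<partial>M)" .
qed



lemma prod_int:
  fixes f h :: "'b \<Rightarrow> real"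
  assumes N: "prob_space N" and f: "integrable N f" and h: "integrable N h"
  shows "integrable (N \<Otimes>\<^sub>M N) (\<lambda>(x,y). f x * h y)"
    and "(\<integral>(x,y). f x * h y \<partial>(N \<Otimes>\<^sub>M N)) = integral\<^sup>L N f * integral\<^sup>L N h"
proof -
  interpret N: prob_space N by fact
  interpret P: pair_prob_space N N ..
  have [measurable]: "f \<in> borel_measurable N" "h \<in> borel_measurable N" using f h by auto
  show int: "integrable (N \<Otimes>\<^sub>M N) (\<lambda>(x,y). f x * h y)"
  proof (rule P.Fubini_integrable)
    show "(\<lambda>(x,y). f x * h y) \<in> borel_measurable (N \<Otimes>\<^sub>M N)" by measurable
    have "(\<lambda>x. \<integral>y. norm (case (x, y) of (x, y) \<Rightarrow> f x * h y) \<partial>N) = (\<lambda>x. \<bar>f x\<bar> * (\<integral>y. \<bar>h y\<bar> \<partial>N))"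
      by (simp add: abs_mult)
    then show "integrable N (\<lambda>x. \<integral>y. norm (case (x, y) of (x, y) \<Rightarrow> f x * h y) \<partial>N)"
      using f by (simp add: integrable_mult_left)
    show "AE x in N. integrable N (\<lambda>y. case (x, y) of (x, y) \<Rightarrow> f x * h y)"
      using h by (simp add: integrable_mult_right)
  qed
  have "(\<integral>(x,y). f x * h y \<partial>(N \<Otimes>\<^sub>M N)) = (\<integral>x. (\<integral>y. f x * h y \<partial>N) \<partial>N)"
    using P.integral_fst[of "\<lambda>x y. f x * h y"] int by simp
  also have "\<dots> = integral\<^sup>L N f * integral\<^sup>L N h" by simp
  finally show "(\<integral>(x,y). f x * h y \<partial>(N \<Otimes>\<^sub>M N)) = integral\<^sup>L N f * integral\<^sup>L N h" .
qed

lemma cheb_tp2: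
  fixes X g0 g1 :: "'b \<Rightarrow> real"
  assumes N: "prob_space N" and X: "integrable N X"
    and g0[measurable]: "g0 \<in> borel_measurable N" and g1[measurable]: "g1 \<in> borel_measurable N"
    and b0: "\<forall>x\<in>space N. \<bar>g0 x\<bar> \<le> 1" and b1: "\<forall>x\<in>space N. \<bar>g1 x\<bar> \<le> 1"
    and tp: "\<forall>x\<in>space N. \<forall>y\<in>space N. X y \<le> X x \<longrightarrow> g1 x * g0 y \<le> g0 x * g1 y"
  shows "(\<integral>x. X x * g1 x \<partial>N) * (\<integral>x. g0 x \<partial>N) \<le> (\<integral>x. X x * g0 x \<partial>N) * (\<integral>x. g1 x \<partial>N)"
proof -
  interpret N: prob_space N by fact
  interpret P: pair_prob_space N N ..
  have [measurable]: "X \<in> borel_measurable N" using X by auto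
  have i0: "integrable N g0" by (rule N.integrable_const_bound[where B=1]) (use b0 in auto)
  have i1: "integrable N g1" by (rule N.integrable_const_bound[where B=1]) (use b1 in auto)
  have iX0: "integrable N (\<lambda>x. X x * g0 x)"
    by (rule Bochner_Integration.integrable_bound[OF X]) (use b0 in \<open>auto simp: abs_mult intro!: mult_left_le\<close>)
  have iX1: "integrable N (\<lambda>x. X x * g1 x)"
    by (rule Bochner_Integration.integrable_bound[OF X]) (use b1 in \<open>auto simp: abs_mult intro!: mult_left_le\<close>)
  note A = prod_int[OF N iX0 i1] and B = prod_int[OF N iX1 i0]
    and C = prod_int[OF N i0 iX1] and D = prod_int[OF N i1 iX0]
  let ?P = "N \<Otimes>\<^sub>M N"
  define fA where "fA = (\<lambda>(x,y). (X x * g0 x) * g1 y)"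
  define fB where "fB = (\<lambda>(x,y). (X x * g1 x) * g0 y)"
  define fC where "fC = (\<lambda>(x,y). g0 x * (X y * g1 y))"
  define fD where "fD = (\<lambda>(x,y). g1 x * (X y * g0 y))"
  have iA: "integrable ?P fA" and iB: "integrable ?P fB" and iC: "integrable ?P fC" and iD: "integrable ?P fD"
    using A B C D by (simp_all add: fA_def fB_def fC_def fD_def)
  have eA: "integral\<^sup>L ?P fA = (\<integral>x. X x * g0 x \<partial>N) * (\<integral>x. g1 x \<partial>N)"
    using A by (simp add: fA_def)
  have eB: "integral\<^sup>L ?P fB = (\<integral>x. X x * g1 x \<partial>N) * (\<integral>x. g0 x \<partial>N)"
    using B by (simp add: fB_def)
  have eC: "integral\<^sup>L ?P fC = (\<integral>x. g0 x \<partial>N) * (\<integral>x. X x * g1 x \<partial>N)"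
    using C by (simp add: fC_def)
  have eD: "integral\<^sup>L ?P fD = (\<integral>x. g1 x \<partial>N) * (\<integral>x. X x * g0 x \<partial>N)"
    using D by (simp add: fD_def)
  have "0 \<le> (\<integral>z. (X (fst z) - X (snd z)) * (g0 (fst z) * g1 (snd z) - g1 (fst z) * g0 (snd z)) \<partial>?P)"
  proof (rule Bochner_Integration.integral_nonneg)
    fix z assume "z \<in> space ?P"
    then have z: "fst z \<in> space N" "snd z \<in> space N" by (auto simp: space_pair_measure)
    show "0 \<le> (X (fst z) - X (snd z)) * (g0 (fst z) * g1 (snd z) - g1 (fst z) * g0 (snd z))"
    proof (cases "X (snd z) \<le> X (fst z)")
      case True
      then show ?thesis using tp z by (intro mult_nonneg_nonneg) auto
    next
      case False
      then have "g1 (snd z) * g0 (fst z) \<le> g0 (snd z) * g1 (fst z)" using tp z by auto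
      then show ?thesis using False by (intro mult_nonpos_nonpos) (auto simp: algebra_simps)
    qed
  qed
  also have "(\<integral>z. (X (fst z) - X (snd z)) * (g0 (fst z) * g1 (snd z) - g1 (fst z) * g0 (snd z)) \<partial>?P)
     = (\<integral>z. (fA z - fB z) + (fD z - fC z) \<partial>?P)"
    by (rule Bochner_Integration.integral_cong) (auto simp: algebra_simps fA_def fB_def fC_def fD_def split: prod.splits)
  also have "\<dots> = (integral\<^sup>L ?P fA - integral\<^sup>L ?P fB) + (integral\<^sup>L ?P fD - integral\<^sup>L ?P fC)"
    using iA iB iC iD by (simp add: Bochner_Integration.integral_diff Bochner_Integration.integral_add)
  finally show ?thesis unfolding eA eB eC eD by (simp add: algebra_simps)
qed



theorem theorem2:
  fixes M :: "'a measure" and S :: "nat \<Rightarrow> 'a \<Rightarrow> real" and m i k :: nat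
  assumes "prob_space M"
    and "m \<ge> 2"
    and "prob_space.indep_vars M (\<lambda>_. borel) S {1..m}"
    and "\<forall>j\<in>{1..m}. AE \<omega> in M. S j \<omega> \<ge> 0"
    and "\<forall>j\<in>{1..m}. \<exists>f. distributed M lborel (S j) f"
    and "\<forall>j\<in>{1..m}. integrable M (S j)"
    and "i \<in> {1..m-1}" and "k \<in> {1..m-1}"
    and "measure M {\<omega> \<in> space M. rank m S i \<omega> = k} > 0"
    and "measure M {\<omega> \<in> space M. rank m S i \<omega> = k + 1} > 0"
  shows "cond_exp_event M (S i) {\<omega> \<in> space M. rank m S i \<omega> = k}
           \<ge> cond_exp_event M (S i) {\<omega> \<in> space M. rank m S i \<omega> = k + 1}"
proof -
  note P = assms(1) and ind = assms(3)
  interpret prob_space M by fact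
  define L where "L = {1..m} - {i}"
  have iI: "i \<in> {1..m}" using assms(7) by auto
  have k1: "1 \<le> k" using assms(8) by auto
  have LI: "L \<subseteq> {1..m}" "i \<notin> L" and fin: "finite L" by (auto simp: L_def)
  have Si[measurable]: "S i \<in> borel_measurable M" using ind iI unfolding indep_vars_def by auto
  have intSi: "integrable M (\<lambda>\<omega>. S i \<omega>)" using assms(6) iI by auto
  have int1: "integrable M (\<lambda>\<omega>. (\<lambda>_. 1::real) (S i \<omega>))" by simp
  define c0 :: real where "c0 = real k - 1"
  define c1 :: real where "c1 = real k"
  define G where "G c s = measure M {\<omega>\<in>space M. real (card {l\<in>L. s < S l \<omega>}) = c}" for c s
  have rk: "rank m S i \<omega> = k \<longleftrightarrow> real (card {l\<in>L. S i \<omega> < S l \<omega>}) = c0"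
       "rank m S i \<omega> = k + 1 \<longleftrightarrow> real (card {l\<in>L. S i \<omega> < S l \<omega>}) = c1" for \<omega>
  proof -
    have "{l \<in> {1..m}. l \<noteq> i \<and> S l \<omega> > S i \<omega>} = {l\<in>L. S i \<omega> < S l \<omega>}" by (auto simp: L_def)
    then have r: "rank m S i \<omega> = 1 + card {l\<in>L. S i \<omega> < S l \<omega>}" unfolding rank_def by simp
    define n where "n = card {l\<in>L. S i \<omega> < S l \<omega>}"
    have "1 + n = k \<longleftrightarrow> real n = real k - 1" using k1 by linarith
    moreover have "1 + n = k + 1 \<longleftrightarrow> real n = real k" by linarith
    ultimately show "rank m S i \<omega> = k \<longleftrightarrow> real (card {l\<in>L. S i \<omega> < S l \<omega>}) = c0"
       "rank m S i \<omega> = k + 1 \<longleftrightarrow> real (card {l\<in>L. S i \<omega> < S l \<omega>}) = c1"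
      unfolding r n_def[symmetric] c0_def c1_def by auto
  qed
  have ce: "(LINT x:{\<omega> \<in> space M. real (card {l\<in>L. S i \<omega> < S l \<omega>}) = c}|M. S i x)
       = (\<integral>\<omega>. S i \<omega> * G c (S i \<omega>) \<partial>M)"
    and cm: "measure M {\<omega> \<in> space M. real (card {l\<in>L. S i \<omega> < S l \<omega>}) = c}
       = (\<integral>\<omega>. G c (S i \<omega>) \<partial>M)" for c
  proof -
    have a: "(LINT x:{\<omega> \<in> space M. real (card {l\<in>L. S i \<omega> < S l \<omega>}) = c}|M. S i x)
       = (\<integral>\<omega>. S i \<omega> * (if real (card {l\<in>L. S i \<omega> < S l \<omega>}) = c then 1 else 0) \<partial>M)"
      unfolding set_lebesgue_integral_def
      by (rule Bochner_Integration.integral_cong) (auto split: split_indicator)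
    have b: "measure M {\<omega> \<in> space M. real (card {l\<in>L. S i \<omega> < S l \<omega>}) = c}
       = (\<integral>\<omega>. (1::real) * (if real (card {l\<in>L. S i \<omega> < S l \<omega>}) = c then 1 else 0) \<partial>M)"
    proof -
      have "(\<integral>\<omega>. (1::real) * (if real (card {l\<in>L. S i \<omega> < S l \<omega>}) = c then 1 else 0) \<partial>M)
          = (\<integral>\<omega>. indicator {\<omega> \<in> space M. real (card {l\<in>L. S i \<omega> < S l \<omega>}) = c} \<omega> \<partial>M)"
        by (rule Bochner_Integration.integral_cong) (auto split: split_indicator)
      then show ?thesis by (simp add: Int_absorb2)
    qed
    have e1: "(\<integral>\<omega>. S i \<omega> * (if real (card {l\<in>L. S i \<omega> < S l \<omega>}) = c then 1 else 0) \<partial>M)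
       = (\<integral>\<omega>. S i \<omega> * G c (S i \<omega>) \<partial>M)"
      unfolding G_def by (rule fub(3)[OF P ind iI LI fin]) (auto simp: intSi)
    have e2: "(\<integral>\<omega>. (1::real) * (if real (card {l\<in>L. S i \<omega> < S l \<omega>}) = c then 1 else 0) \<partial>M)
       = (\<integral>\<omega>. 1 * G c (S i \<omega>) \<partial>M)"
      unfolding G_def by (rule fub(3)[OF P ind iI LI fin]) auto
    show "(LINT x:{\<omega> \<in> space M. real (card {l\<in>L. S i \<omega> < S l \<omega>}) = c}|M. S i x)
       = (\<integral>\<omega>. S i \<omega> * G c (S i \<omega>) \<partial>M)" unfolding a e1 ..
    show "measure M {\<omega> \<in> space M. real (card {l\<in>L. S i \<omega> < S l \<omega>}) = c}
       = (\<integral>\<omega>. G c (S i \<omega>) \<partial>M)" unfolding b e2 by simp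
  qed
  have Gm[measurable]: "G c \<in> borel_measurable borel" for c
    unfolding G_def by (rule fub(1)[OF P ind iI LI fin, where f="\<lambda>_. 1"]) auto
  have Gb: "\<bar>G c s\<bar> \<le> 1" for c s unfolding G_def by simp
  define xs where "xs = sorted_list_of_set L"
  have xs: "distinct xs" "set xs = L" using fin by (auto simp: xs_def)
  have cv: "(real n = real_of_int j) = (int n = j)" for n :: nat and j :: int
    by (metis of_int_eq_iff of_int_of_nat_eq)
  have Gpb: "G (real_of_int j) s = pb (map (\<lambda>l. measure M {\<omega>\<in>space M. s < S l \<omega>}) xs) j" for j s
  proof -
    have "G (real_of_int j) s = measure M {\<omega>\<in>space M. int (card {l\<in>set xs. s < S l \<omega>}) = j}"
      unfolding G_def cv xs(2) ..
    also have "\<dots> = pb (map (\<lambda>l. measure M {\<omega>\<in>space M. s < S l \<omega>}) xs) j"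
      by (rule pb_event[OF P ind xs(1)]) (use xs LI in auto)
    finally show ?thesis .
  qed
  have c0i: "c0 = real_of_int (int k - 1)" and c1i: "c1 = real_of_int (int k)"
    by (simp_all add: c0_def c1_def)
  have tp: "G c1 s * G c0 s' \<le> G c0 s * G c1 s'" if ss: "s' \<le> s" for s s'
  proof -
    have mono: "\<forall>l\<in>set xs. 0 \<le> measure M {\<omega>\<in>space M. s < S l \<omega>} \<and>
        measure M {\<omega>\<in>space M. s < S l \<omega>} \<le> measure M {\<omega>\<in>space M. s' < S l \<omega>} \<and>
        measure M {\<omega>\<in>space M. s' < S l \<omega>} \<le> 1"
    proof
      fix l assume "l \<in> set xs"
      then have "l \<in> {1..m}" using xs LI by auto
      then have [measurable]: "S l \<in> borel_measurable M" using ind unfolding indep_vars_def by auto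
      show "0 \<le> measure M {\<omega>\<in>space M. s < S l \<omega>} \<and>
        measure M {\<omega>\<in>space M. s < S l \<omega>} \<le> measure M {\<omega>\<in>space M. s' < S l \<omega>} \<and>
        measure M {\<omega>\<in>space M. s' < S l \<omega>} \<le> 1"
        using ss by (auto intro!: finite_measure_mono)
    qed
    show ?thesis
      using pb_K[OF mono, rule_format, of "int k - 1" "int k" "int k" "int k - 1"]
      unfolding c0i c1i Gpb by simp
  qed
  have main: "(\<integral>\<omega>. S i \<omega> * G c1 (S i \<omega>) \<partial>M) * (\<integral>\<omega>. G c0 (S i \<omega>) \<partial>M)
     \<le> (\<integral>\<omega>. S i \<omega> * G c0 (S i \<omega>) \<partial>M) * (\<integral>\<omega>. G c1 (S i \<omega>) \<partial>M)"
    by (rule cheb_tp2[OF P intSi]) (use Gb tp in auto)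
  have sets: "{\<omega> \<in> space M. rank m S i \<omega> = k} = {\<omega> \<in> space M. real (card {l\<in>L. S i \<omega> < S l \<omega>}) = c0}"
     "{\<omega> \<in> space M. rank m S i \<omega> = k + 1} = {\<omega> \<in> space M. real (card {l\<in>L. S i \<omega> < S l \<omega>}) = c1}"
    using rk by auto
  have p0: "0 < (\<integral>\<omega>. G c0 (S i \<omega>) \<partial>M)" using assms(9) unfolding sets cm .
  have p1: "0 < (\<integral>\<omega>. G c1 (S i \<omega>) \<partial>M)" using assms(10) unfolding sets cm .
  show ?thesis
    unfolding sets cond_exp_event_def ce cm
    using main p0 p1 by (simp add: divide_simps mult.commute)
qed


end
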